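(* Let $r\ge1$ be an integer, $d=2r-1$, $\beta>0$, and let $Q$ be a complex polynomial of degree $r$ with $Q(0)=0$. Define $a_i,b_i$ ($0\le i\le d$) by $1-2Q'(x)=\sum_{i=0}^d a_ix^i$ and $x\big(Q'(x)^2-Q'(x)-Q''(x)\big)=\sum_{i=0}^d b_ix^i$, and for $0\le i\le\min(n,d)$ put $\gamma_{ni}=\big(a_i(n-i+\frac\beta2)+b_i\big)\sqrt{\frac{n!(\beta)_n}{(n-i)!(\beta)_{n-i}}}$. Let $P_0=1$, $P_n=0$ for $n<0$, and $$\Big(x+\frac{\beta}{2}\Big)P_n(x)=\sqrt{(n+1)(n+\beta)}\,P_{n+1}(x)+\sum_{i=0}^{\min(n,d)}\gamma_{ni}P_{n-i}(x),\qquad n\ge0,$$ and set $\widehat P_n(x)=\sqrt{n!(\beta)_n}\,P_n(x)$. Then $$\sum_{n=0}^\infty\frac{\widehat P_n(x)}{n!(\beta)_n}z^n=e^{Q(z)}\,{}_1F_1\left(\begin{matrix}-x\\ \beta\end{matrix};-z\right).$$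
   Context: $(a)_n=a(a+1)\cdots(a+n-1)$, $(a)_0=1$; ${}_1F_1\left(\begin{matrix}a\\ b\end{matrix};x\right)=\sum_{m\ge0}\frac{(a)_m}{(b)_m}\frac{x^m}{m!}$. *)

theory Defs
  imports "HOL-Analysis.Analysis" "HOL-Computational_Algebra.Polynomial"
begin

definition hyp1F1 :: "complex \<Rightarrow> complex \<Rightarrow> complex \<Rightarrow> complex" where
  "hyp1F1 a b w = (\<Sum>m. pochhammer a m / pochhammer b m * w ^ m / of_nat (fact m))"

end

theory Submission
  imports Defs "HOL-Complex_Analysis.Complex_Analysis"
begin

definition mu :: "complex \<Rightarrow> real \<Rightarrow> nat \<Rightarrow> complex" where
  "mu x \<beta> n = (-1)^n * pochhammer (-x) n / (pochhammer (of_real \<beta>) n * fact n)"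

lemma poch_nz: 
  assumes "\<beta> > 0" shows "pochhammer (complex_of_real \<beta>) n \<noteq> 0"
proof
  assume "pochhammer (complex_of_real \<beta>) n = 0"
  then obtain k where "complex_of_real \<beta> = - of_nat k" by (auto simp: pochhammer_eq_0_iff)
  then have "\<beta> = - real k" by (metis of_real_eq_iff of_real_minus of_real_of_nat_eq)
  with assms show False by simp
qed

lemma nz_nb: assumes "\<beta> > 0" shows "(of_nat n + complex_of_real \<beta>) \<noteq> 0" "(complex_of_real \<beta> + of_nat n) \<noteq> 0"
proof -
  show "(of_nat n + complex_of_real \<beta>) \<noteq> 0"
  proof
    assume "(of_nat n + complex_of_real \<beta>) = 0"
    then have "complex_of_real (real n + \<beta>) = 0" by simp
    then have "real n + \<beta> = 0" by (simp only: of_real_eq_0_iff)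
    with assms show False by simp
  qed
  then show "(complex_of_real \<beta> + of_nat n) \<noteq> 0" by (simp add: add.commute)
qed

lemma mu_Suc:
  assumes "\<beta> > 0"
  shows "of_nat (Suc n) * (of_nat n + of_real \<beta>) * mu x \<beta> (Suc n) = (x - of_nat n) * mu x \<beta> n"
proof -
  have nz: "pochhammer (complex_of_real \<beta>) n \<noteq> 0" using poch_nz assms by blast
  note nz2 = nz_nb[OF assms, of n]
  have nz3: "(fact n :: complex) \<noteq> 0" by simp
  have nz4: "(of_nat (Suc n) :: complex) \<noteq> 0" by (simp del: of_nat_Suc)
  define p where "p = pochhammer (-x) n"
  define q where "q = pochhammer (complex_of_real \<beta>) n"
  define f where "f = (fact n :: complex)"
  define S where "S = (of_nat (Suc n) :: complex)"
  have e1: "mu x \<beta> (Suc n) = (-1)^n * (-1) * (p * (-x + of_nat n)) / (q * (of_real \<beta> + of_nat n) * (S * f))"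
    unfolding mu_def p_def q_def f_def S_def by (simp add: pochhammer_Suc fact_Suc del: of_nat_Suc)
  have e2: "mu x \<beta> n = (-1)^n * p / (q * f)" unfolding mu_def p_def q_def f_def by simp
  have e3: "mu x \<beta> (Suc n) = mu x \<beta> n * ((x - of_nat n) / (S * (of_real \<beta> + of_nat n)))"
    unfolding e1 e2 using nz nz2 nz3 nz4 unfolding p_def[symmetric] q_def[symmetric] f_def[symmetric] S_def[symmetric]
    by (simp add: field_simps)
  have A: "S * (of_real \<beta> + of_nat n) \<noteq> 0" using nz2 nz4 S_def by simp
  have B: "of_nat (Suc n) * (of_nat n + of_real \<beta>) = S * (of_real \<beta> + of_nat n)"
    unfolding S_def by (simp add: add.commute)
  have C: "\<And>T m y. (T::complex) \<noteq> 0 \<Longrightarrow> T * (m * (y / T)) = y * m" by simp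
  show ?thesis unfolding e3 B using C[OF A] by simp
qed

lemma mu_0: "mu x \<beta> 0 = 1" by (simp add: mu_def)

lemma mu_summable:
  assumes "\<beta> > 0"
  shows "summable (\<lambda>n. mu x \<beta> n * z ^ n)"
proof -
  define K where "K = (norm x + 1) * norm z"
  define N where "N = nat \<lceil>2 * K\<rceil> + 1"
  have step: "norm (mu x \<beta> (Suc n) * z ^ Suc n) \<le> 1/2 * norm (mu x \<beta> n * z ^ n)" if n: "n \<ge> N" for n
  proof -
    have K0: "K \<ge> 0" unfolding K_def by simp
    have n1: "real n \<ge> 1" using n N_def by simp
    have nK: "2 * K \<le> real n" using n unfolding N_def by linarith
    define t where "t = norm (mu x \<beta> (Suc n))"
    define m where "m = norm (mu x \<beta> n)"
    have t0: "t \<ge> 0" "m \<ge> 0" unfolding t_def m_def by simp_all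
    have "norm (of_nat (Suc n) * (of_nat n + of_real \<beta>) * mu x \<beta> (Suc n)) = norm ((x - of_nat n) * mu x \<beta> n)"
      using mu_Suc[OF assms] by simp
    moreover have "norm (of_nat n + complex_of_real \<beta>) = real n + \<beta>"
    proof -
      have "(of_nat n + complex_of_real \<beta>) = complex_of_real (real n + \<beta>)" by simp
      then show ?thesis using assms by (simp only: norm_of_real)
    qed
    ultimately have eq: "(real n + 1) * (real n + \<beta>) * t = norm (x - of_nat n) * m"
      unfolding t_def m_def by (simp add: norm_mult del: of_nat_Suc) (simp add: algebra_simps)
    have xn: "norm (x - of_nat n) \<le> norm x + real n" using norm_triangle_ineq4[of x "of_nat n"] by simp
    have "(real n + 1) * (real n + \<beta>) * (t * norm z) = norm (x - of_nat n) * norm z * m"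
      using arg_cong[OF eq, of "\<lambda>u. u * norm z"] by (simp add: algebra_simps)
    also have "\<dots> \<le> (norm x + real n) * norm z * m"
      using xn t0 by (intro mult_right_mono mult_right_mono) auto
    also have "(norm x + real n) * norm z \<le> K * real n"
      unfolding K_def using n1 mult_right_mono[OF n1, of "norm x * norm z"] by (simp add: algebra_simps)
    then have "(norm x + real n) * norm z * m \<le> K * real n * m" using t0 by (intro mult_right_mono) auto
    also have "K * real n * m \<le> (real n / 2) * real n * m"
      using nK t0 by (intro mult_right_mono) auto
    also have "\<dots> \<le> (real n + 1) * (real n + \<beta>) * (m / 2)"
    proof -
      have "real n * real n \<le> (real n + 1) * (real n + \<beta>)" using assms
        by (intro mult_mono) auto
      then show ?thesis using t0 by (simp add: mult_right_mono divide_right_mono)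
    qed
    finally have fin: "(real n + 1) * (real n + \<beta>) * (t * norm z) \<le> (real n + 1) * (real n + \<beta>) * (m / 2)" .
    have Ppos: "(real n + 1) * (real n + \<beta>) > 0" using assms by simp
    have tz: "t * norm z \<le> m / 2" using fin Ppos by (simp only: mult_le_cancel_left_pos)
    have tzn: "t * norm z * norm z ^ n \<le> m / 2 * norm z ^ n" by (rule mult_right_mono[OF tz]) simp
    then show "norm (mu x \<beta> (Suc n) * z ^ Suc n) \<le> 1/2 * norm (mu x \<beta> n * z ^ n)"
      unfolding t_def m_def
      using tzn by (simp add: norm_mult norm_power mult_ac)
  qed
  show ?thesis by (rule summable_ratio_test[of "1/2" N]) (use step in auto)
qed

lemma mu_radius:
  assumes "\<beta> > 0"
  shows "fps_conv_radius (Abs_fps (mu x \<beta>)) = \<infinity>"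
proof -
  have H: "ereal r \<le> fps_conv_radius (Abs_fps (mu x \<beta>))" if "r > 0" for r :: real
  proof -
    have "conv_radius (mu x \<beta>) \<ge> norm (complex_of_real r)"
      by (rule conv_radius_geI) (rule mu_summable[OF assms])
    then show ?thesis using that by (simp add: fps_conv_radius_def)
  qed
  show ?thesis
  proof (cases "fps_conv_radius (Abs_fps (mu x \<beta>))")
    case (real s) have "0 < max 1 (s+1)" by simp
    from H[OF this] real show ?thesis by simp
  next
    case MInf with H[of 1] show ?thesis by simp
  qed simp
qed

lemma ring_id:
  fixes FE M D1 D2 q1 q2 X cc h x :: "'a::comm_ring_1"
  assumes "X*D2 = x*M - (cc + X)*D1" "cc = 2*h"
  shows "(x + h) * (FE*M) = X*(FE*(q1*q1*M + 2*q1*D1 + q2*M + D2)) + cc*(FE*(q1*M+D1))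
     + (1-2*q1)*(X*(FE*(q1*M+D1))) + h*((1-2*q1)*(FE*M)) + (X*(q1^2 - q1 - q2))*(FE*M)"
proof -
  have "X*(FE*(q1*q1*M + 2*q1*D1 + q2*M + D2)) = X*(FE*(q1*q1*M + 2*q1*D1 + q2*M)) + FE*(X*D2)"
    by (simp add: algebra_simps)
  also have "\<dots> = X*(FE*(q1*q1*M + 2*q1*D1 + q2*M)) + FE*(x*M - (cc + X)*D1)" using assms(1) by simp
  finally have e: "X*(FE*(q1*q1*M + 2*q1*D1 + q2*M + D2)) = X*(FE*(q1*q1*M + 2*q1*D1 + q2*M)) + FE*(x*M - (cc + X)*D1)" .
  show ?thesis unfolding e assms(2) by (simp add: algebra_simps power2_eq_square)
qed

lemma F_ode:
  fixes FE M q1 :: "complex fps"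
  assumes dE: "fps_deriv FE = q1 * FE"
    and dM: "fps_X * fps_deriv (fps_deriv M) + (fps_const c + fps_X) * fps_deriv M = fps_const x * M"
  shows "fps_const (x + c/2) * (FE*M) = fps_X * fps_deriv (fps_deriv (FE*M)) + fps_const c * fps_deriv (FE*M)
     + (1 - 2*q1) * (fps_X * fps_deriv (FE*M)) + fps_const (c/2) * ((1 - 2*q1) * (FE*M))
     + (fps_X * (q1^2 - q1 - fps_deriv q1)) * (FE*M)"
proof -
  have d1: "fps_deriv (FE*M) = FE * (q1 * M + fps_deriv M)" using dE by (simp add: algebra_simps)
  have d2: "fps_deriv (fps_deriv (FE*M)) = FE * (q1*q1*M + 2*q1*fps_deriv M + fps_deriv q1 * M + fps_deriv (fps_deriv M))"
    unfolding d1 using dE by (simp add: algebra_simps mult_2)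
  have c2: "fps_const c = 2 * fps_const (c/2)" by (simp add: numeral_fps_const fps_const_mult[symmetric])
  have cx: "fps_const (x + c/2) = fps_const x + fps_const (c/2)" by simp
  have XM: "fps_X * fps_deriv (fps_deriv M) = fps_const x * M - (fps_const c + fps_X) * fps_deriv M"
    using dM by (simp add: algebra_simps)
  show ?thesis unfolding d2 unfolding d1 cx
    by (rule ring_id[OF XM c2])
qed

lemma coeff_rec:
  fixes F A B :: "complex fps" and c x :: complex
  assumes ode: "fps_const (x + c/2) * F = fps_X * fps_deriv (fps_deriv F) + fps_const c * fps_deriv F
     + A * (fps_X * fps_deriv F) + fps_const (c/2) * (A * F) + B * F"
    and A0: "\<And>i. i > d \<Longrightarrow> A $ i = 0" and B0: "\<And>i. i > d \<Longrightarrow> B $ i = 0"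
  shows "(x + c/2) * F $ n = of_nat (Suc n) * (of_nat n + c) * F $ Suc n
          + (\<Sum>i=0..min n d. (A $ i * (of_nat (n - i) + c/2) + B $ i) * F $ (n - i))"
proof -
  have "(fps_const (x + c/2) * F) $ n = (x + c/2) * F $ n" by simp
  also have "\<dots> = (fps_X * fps_deriv (fps_deriv F) + fps_const c * fps_deriv F
     + A * (fps_X * fps_deriv F) + fps_const (c/2) * (A * F) + B * F) $ n" using ode by (metis calculation)
  also have "\<dots> = of_nat n * (of_nat (Suc n) * F $ Suc n) + c * (of_nat (Suc n) * F $ Suc n)
      + (\<Sum>i=0..n. A $ i * (of_nat (n - i) * F $ (n - i))) + c/2 * (\<Sum>i=0..n. A $ i * F $ (n - i))
      + (\<Sum>i=0..n. B $ i * F $ (n - i))"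
    apply (simp only: fps_add_nth fps_mult_left_const_nth fps_mult_fps_X_deriv_shift)
    apply (simp add: fps_mult_nth fps_mult_fps_X_deriv_shift del: of_nat_Suc)
    done
  also have "\<dots> = of_nat (Suc n) * (of_nat n + c) * F $ Suc n
          + (\<Sum>i=0..n. (A $ i * (of_nat (n - i) + c/2) + B $ i) * F $ (n - i))"
    by (simp add: sum_distrib_left sum.distrib[symmetric] algebra_simps del: of_nat_Suc)
  also have "(\<Sum>i=0..n. (A $ i * (of_nat (n - i) + c/2) + B $ i) * F $ (n - i))
      = (\<Sum>i=0..min n d. (A $ i * (of_nat (n - i) + c/2) + B $ i) * F $ (n - i))"
    by (rule sum.mono_neutral_right) (auto simp: A0 B0)
  finally show ?thesis by simp
qed

lemma FE_facts:
  fixes Q :: "complex poly"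
  defines "E \<equiv> (\<lambda>w. exp (poly Q w))"
  shows "E has_fps_expansion fps_expansion E 0"
    and "fps_deriv (fps_expansion E 0) = fps_of_poly (pderiv Q) * fps_expansion E 0"
    and "E holomorphic_on UNIV"
proof -
  show hol: "E holomorphic_on UNIV" unfolding E_def by (intro holomorphic_intros)
  then have "E analytic_on UNIV" by (simp add: analytic_on_open)
  then have "E analytic_on {0}" using analytic_on_subset by blast
  then show exp: "E has_fps_expansion fps_expansion E 0" by (rule analytic_at_imp_has_fps_expansion_0)
  have dE: "deriv E = (\<lambda>w. poly (pderiv Q) w * E w)"
  proof
    fix w
    have "(E has_field_derivative exp (poly Q w) * poly (pderiv Q) w) (at w)"
      unfolding E_def by (auto intro!: derivative_eq_intros poly_DERIV)
    then show "deriv E w = poly (pderiv Q) w * E w" by (simp add: DERIV_imp_deriv E_def mult.commute)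
  qed
  have p: "poly (pderiv Q) has_fps_expansion fps_of_poly (pderiv Q)"
  proof -
    have "eval_fps (fps_of_poly (pderiv Q)) has_fps_expansion fps_of_poly (pderiv Q)"
      by (rule eval_fps_has_fps_expansion) simp
    moreover have "eval_fps (fps_of_poly (pderiv Q)) = poly (pderiv Q)" by (rule ext) simp
    ultimately show ?thesis by simp
  qed
  have "deriv E has_fps_expansion fps_deriv (fps_expansion E 0)" by (rule has_fps_expansion_deriv[OF exp])
  moreover have "deriv E has_fps_expansion fps_of_poly (pderiv Q) * fps_expansion E 0"
    unfolding dE by (rule has_fps_expansion_mult[OF p exp])
  ultimately show "fps_deriv (fps_expansion E 0) = fps_of_poly (pderiv Q) * fps_expansion E 0"
    by (rule fps_expansion_unique_complex)
qed

lemma M_ode: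
  assumes "\<beta> > 0"
  shows "fps_X * fps_deriv (fps_deriv (Abs_fps (mu x \<beta>))) + (fps_const (of_real \<beta>) + fps_X) * fps_deriv (Abs_fps (mu x \<beta>))
     = fps_const x * Abs_fps (mu x \<beta>)"
proof (rule fps_ext)
  fix n
  have "(fps_X * fps_deriv (fps_deriv (Abs_fps (mu x \<beta>))) + (fps_const (of_real \<beta>) + fps_X) * fps_deriv (Abs_fps (mu x \<beta>))) $ n
     = of_nat n * (of_nat (Suc n) * mu x \<beta> (Suc n)) + of_real \<beta> * (of_nat (Suc n) * mu x \<beta> (Suc n)) + of_nat n * mu x \<beta> n"
    by (simp only: distrib_right fps_add_nth fps_mult_left_const_nth fps_mult_fps_X_deriv_shift) (simp add: fps_deriv_def del: of_nat_Suc)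
  also have "\<dots> = of_nat (Suc n) * (of_nat n + of_real \<beta>) * mu x \<beta> (Suc n) + of_nat n * mu x \<beta> n"
    by (simp add: algebra_simps del: of_nat_Suc)
  also have "\<dots> = x * mu x \<beta> n" unfolding mu_Suc[OF assms] by (simp add: algebra_simps)
  finally show "(fps_X * fps_deriv (fps_deriv (Abs_fps (mu x \<beta>))) + (fps_const (of_real \<beta>) + fps_X) * fps_deriv (Abs_fps (mu x \<beta>))) $ n
     = (fps_const x * Abs_fps (mu x \<beta>)) $ n" by simp
qed

lemma M_hyp:
  assumes "\<beta> > 0"
  shows "eval_fps (Abs_fps (mu x \<beta>)) z = hyp1F1 (- x) (of_real \<beta>) (- z)"
  unfolding eval_fps_def hyp1F1_def
proof (rule suminf_cong)
  fix n
  have g: "\<And>s p q f w :: complex. s*p/(q*f)*w = p/q*(s*w)/f" by (simp add: divide_inverse mult_ac)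
  show "fps_nth (Abs_fps (mu x \<beta>)) n * z ^ n = pochhammer (- x) n / pochhammer (of_real \<beta>) n * (- z) ^ n / of_nat (fact n)"
    unfolding mu_def fps_nth_Abs_fps of_nat_fact power_minus[of z n] by (rule g)
qed

theorem mainTheorem3:
  fixes r :: nat and \<beta> :: real and Q :: "complex poly"
    and P :: "nat \<Rightarrow> complex \<Rightarrow> complex"
    and a b :: "nat \<Rightarrow> complex" and \<gamma> :: "nat \<Rightarrow> nat \<Rightarrow> complex"
    and x z :: complex
  assumes r: "r \<ge> 1"
    and \<beta>: "\<beta> > 0"
    and degQ: "degree Q = r"
    and Q0: "poly Q 0 = 0"
    and a_def: "\<And>i. a i = coeff (1 - smult 2 (pderiv Q)) i"
    and b_def: "\<And>i. b i = coeff ([:0, 1:] * ((pderiv Q)^2 - pderiv Q - pderiv (pderiv Q))) i"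
    and \<gamma>_def: "\<And>n i. \<gamma> n i = (a i * (of_nat (n - i) + of_real (\<beta> / 2)) + b i) *
        of_real (sqrt (fact n * pochhammer \<beta> n / (fact (n - i) * pochhammer \<beta> (n - i))))"
    and P0: "\<And>y. P 0 y = 1"
    and Prec: "\<And>n y. (y + of_real (\<beta> / 2)) * P n y =
        of_real (sqrt ((real n + 1) * (real n + \<beta>))) * P (Suc n) y
        + (\<Sum>i = 0..min n (2 * r - 1). \<gamma> n i * P (n - i) y)"
  shows "(\<lambda>n. of_real (sqrt (fact n * pochhammer \<beta> n)) * P n x
              / of_real (fact n * pochhammer \<beta> n) * z ^ n)
         sums (exp (poly Q z) * hyp1F1 (- x) (of_real \<beta>) (- z))"
proof -
  define d where "d = 2 * r - 1"
  define h where "h = (\<lambda>n. fact n * pochhammer \<beta> n :: real)"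
  define s where "s = (\<lambda>n. complex_of_real (sqrt (h n)))"
  define c where "c = (\<lambda>n. P n x / s n)"
  define cb where "cb = complex_of_real \<beta>"
  have hpos: "h n > 0" for n unfolding h_def using \<beta> by (simp add: pochhammer_pos)
  have snz: "s n \<noteq> 0" for n unfolding s_def using hpos[of n] by simp
  have Pc: "P n x = s n * c n" for n unfolding c_def using snz[of n] by simp
  have hSuc: "h (Suc n) = h n * ((real n + 1) * (real n + \<beta>))" for n
    unfolding h_def by (simp add: pochhammer_Suc fact_Suc algebra_simps)
  have T1: "complex_of_real (sqrt ((real n + 1) * (real n + \<beta>))) * s (Suc n) = of_nat (Suc n) * (of_nat n + cb) * s n" for n
  proof -
    have nn: "(real n + 1) * (real n + \<beta>) \<ge> 0" using \<beta> by simp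
    have "sqrt ((real n + 1) * (real n + \<beta>)) * sqrt (h (Suc n)) = (real n + 1) * (real n + \<beta>) * sqrt (h n)"
    proof -
      have sq: "sqrt ((real n + 1) * (real n + \<beta>)) * sqrt ((real n + 1) * (real n + \<beta>)) = (real n + 1) * (real n + \<beta>)"
        using nn by simp
      show ?thesis unfolding hSuc real_sqrt_mult[of "h n"] using sq by (metis mult.commute mult.left_commute)
    qed
    then have "complex_of_real (sqrt ((real n + 1) * (real n + \<beta>)) * sqrt (h (Suc n))) = complex_of_real ((real n + 1) * (real n + \<beta>) * sqrt (h n))"
      by simp
    then show ?thesis unfolding s_def cb_def by (simp add: algebra_simps)
  qed
  have T2: "\<gamma> n i * P (n - i) x = (a i * (of_nat (n - i) + cb / 2) + b i) * (s n * c (n - i))" if "i \<le> n" for n i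
  proof -
    have "sqrt (h n / h (n - i)) * sqrt (h (n - i)) = sqrt (h n)"
      using hpos[of "n - i"] by (simp add: real_sqrt_divide)
    then have e: "complex_of_real (sqrt (h n / h (n - i))) * s (n - i) = s n"
      unfolding s_def by (metis of_real_mult)
    have "\<gamma> n i * P (n - i) x = (a i * (of_nat (n - i) + cb / 2) + b i) * (complex_of_real (sqrt (h n / h (n - i))) * s (n - i) * c (n - i))"
      unfolding \<gamma>_def Pc h_def cb_def by (simp add: mult_ac)
    then show ?thesis unfolding e .
  qed
  have RC: "(x + cb / 2) * c n = of_nat (Suc n) * (of_nat n + cb) * c (Suc n)
        + (\<Sum>i = 0..min n d. (a i * (of_nat (n - i) + cb / 2) + b i) * c (n - i))" for n
  proof -
    have "s n * ((x + cb / 2) * c n) = (x + complex_of_real (\<beta> / 2)) * P n x"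
      unfolding Pc cb_def by (simp add: mult_ac)
    also have "\<dots> = complex_of_real (sqrt ((real n + 1) * (real n + \<beta>))) * s (Suc n) * c (Suc n)
        + (\<Sum>i = 0..min n d. \<gamma> n i * P (n - i) x)"
    proof -
      have "(x + complex_of_real (\<beta> / 2)) * P n x = complex_of_real (sqrt ((real n + 1) * (real n + \<beta>))) * P (Suc n) x
        + (\<Sum>i = 0..min n d. \<gamma> n i * P (n - i) x)" unfolding d_def by (rule Prec)
      then show ?thesis unfolding Pc[of "Suc n"] by (simp add: mult_ac)
    qed
    also have "\<dots> = s n * (of_nat (Suc n) * (of_nat n + cb) * c (Suc n)) +
        (\<Sum>i = 0..min n d. s n * ((a i * (of_nat (n - i) + cb / 2) + b i) * c (n - i)))"
      unfolding T1 by (intro arg_cong2[where f="(+)"] sum.cong refl) (simp_all add: T2 mult_ac)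
    also have "\<dots> = s n * (of_nat (Suc n) * (of_nat n + cb) * c (Suc n)
        + (\<Sum>i = 0..min n d. (a i * (of_nat (n - i) + cb / 2) + b i) * c (n - i)))"
      by (simp add: sum_distrib_left distrib_left)
    finally show ?thesis using snz[of n] by simp
  qed
  define E where "E = (\<lambda>w. exp (poly Q w))"
  define FE where "FE = fps_expansion E 0"
  define M where "M = Abs_fps (mu x \<beta>)"
  define q1 where "q1 = fps_of_poly (pderiv Q)"
  define F where "F = FE * M"
  define A where "A = 1 - 2 * q1"
  define B where "B = fps_X * (q1^2 - q1 - fps_deriv q1)"
  have FEexp: "E has_fps_expansion FE" unfolding FE_def E_def by (rule FE_facts(1))
  have dFE: "fps_deriv FE = q1 * FE" unfolding FE_def E_def q1_def by (rule FE_facts(2))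
  have Ehol: "E holomorphic_on UNIV" unfolding E_def by (rule FE_facts(3))
  have ode: "fps_const (x + cb/2) * F = fps_X * fps_deriv (fps_deriv F) + fps_const cb * fps_deriv F
     + A * (fps_X * fps_deriv F) + fps_const (cb/2) * (A * F) + B * F"
    unfolding F_def A_def B_def
    by (rule F_ode[OF dFE]) (unfold M_def cb_def, rule M_ode[OF \<beta>])
  have Aeq: "A = fps_of_poly (1 - smult 2 (pderiv Q))"
    unfolding A_def q1_def by (simp add: fps_of_poly_simps numeral_fps_const)
  have q2: "fps_of_poly (pderiv (pderiv Q)) = fps_deriv q1" unfolding q1_def by (simp add: fps_of_poly_pderiv)
  have Beq: "B = fps_of_poly ([:0, 1:] * ((pderiv Q)^2 - pderiv Q - pderiv (pderiv Q)))"
    unfolding B_def q1_def by (simp add: fps_of_poly_simps fps_of_poly_power fps_of_poly_pderiv)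
  have Ai: "A $ i = a i" for i unfolding Aeq a_def by simp
  have Bi: "B $ i = b i" for i unfolding Beq b_def by simp
  have degA: "degree (1 - smult 2 (pderiv Q)) \<le> d"
    by (rule degree_diff_le) (use degree_smult_le[of 2 "pderiv Q"] degree_pderiv[of Q] degQ in \<open>auto simp: d_def\<close>)
  have degB: "degree ([:0, 1:] * ((pderiv Q)^2 - pderiv Q - pderiv (pderiv Q))) \<le> d"
  proof -
    have d1: "degree (pderiv Q) \<le> r - 1" using degree_pderiv[of Q] degQ by simp
    have d2: "degree (pderiv (pderiv Q)) \<le> r - 1" using degree_pderiv[of "pderiv Q"] d1 by simp
    have d3: "degree ((pderiv Q)^2) \<le> 2 * (r - 1)"
      using degree_power_le[of "pderiv Q" 2] d1 by (simp add: mult.commute)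
    have d4: "degree ((pderiv Q)^2 - pderiv Q - pderiv (pderiv Q)) \<le> 2 * (r - 1)"
      by (intro degree_diff_le) (use d1 d2 d3 in auto)
    have "degree ([:0, 1:] * ((pderiv Q)^2 - pderiv Q - pderiv (pderiv Q))) \<le> degree [:0, (1::complex):] + 2 * (r - 1)"
      using degree_mult_le[of "[:0, (1::complex):]"] d4 by (meson add_le_mono le_refl le_trans)
    then show ?thesis using r unfolding d_def by simp
  qed
  have A0: "A $ i = 0" if "i > d" for i unfolding Aeq fps_of_poly_nth by (rule coeff_eq_0) (use degA that in linarith)
  have B0: "B $ i = 0" if "i > d" for i unfolding Beq fps_of_poly_nth by (rule coeff_eq_0) (use degB that in linarith)
  have FR: "(x + cb/2) * F $ n = of_nat (Suc n) * (of_nat n + cb) * F $ Suc n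
          + (\<Sum>i=0..min n d. (a i * (of_nat (n - i) + cb/2) + b i) * F $ (n - i))" for n
    using coeff_rec[OF ode A0 B0, where n=n] by (simp add: Ai Bi)
  have Knz: "(of_nat (Suc n) * (of_nat n + cb) :: complex) \<noteq> 0" for n
    using nz_nb(1)[OF \<beta>, of n] unfolding cb_def by (simp del: of_nat_Suc)
  have F0: "F $ 0 = 1"
  proof -
    have "FE $ 0 = E 0" using fps_nth_fps_expansion[OF FEexp, of 0] by simp
    then show ?thesis unfolding F_def M_def using Q0 by (simp add: E_def mu_0)
  qed
  have c0: "c 0 = 1" unfolding c_def s_def h_def using P0 by simp
  have cF: "\<forall>m\<le>n. c m = F $ m" for n
  proof (induction n)
    case 0 then show ?case using c0 F0 by simp
  next
    case (Suc n)
    have S: "(\<Sum>i=0..min n d. (a i * (of_nat (n - i) + cb/2) + b i) * c (n - i))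
        = (\<Sum>i=0..min n d. (a i * (of_nat (n - i) + cb/2) + b i) * F $ (n - i))"
      using Suc.IH by (intro sum.cong) auto
    have "of_nat (Suc n) * (of_nat n + cb) * c (Suc n) = of_nat (Suc n) * (of_nat n + cb) * F $ Suc n"
    proof -
      have cn: "c n = F $ n" using Suc.IH by simp
      have "of_nat (Suc n) * (of_nat n + cb) * c (Suc n) = (x + cb / 2) * c n -
        (\<Sum>i=0..min n d. (a i * (of_nat (n - i) + cb/2) + b i) * c (n - i))"
        by (simp only: eq_diff_eq RC[of n])
      also have "\<dots> = (x + cb / 2) * F $ n -
        (\<Sum>i=0..min n d. (a i * (of_nat (n - i) + cb/2) + b i) * F $ (n - i))"
        unfolding S cn ..
      also have "\<dots> = of_nat (Suc n) * (of_nat n + cb) * F $ Suc n"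
        by (simp only: FR[of n] add_diff_cancel_right')
      finally show ?thesis .
    qed
    then have "c (Suc n) = F $ Suc n" using Knz[of n] by simp
    then show ?case using Suc.IH le_Suc_eq by auto
  qed
  have cF': "c n = F $ n" for n using cF[of n] by simp
  define f where "f = (\<lambda>w. E w * eval_fps M w)"
  have Mrad: "fps_conv_radius M = \<infinity>" unfolding M_def by (rule mu_radius[OF \<beta>])
  have fexp: "f has_fps_expansion F" unfolding f_def F_def
    by (rule has_fps_expansion_mult[OF FEexp eval_fps_has_fps_expansion]) (simp add: Mrad)
  have fhol: "f holomorphic_on UNIV" unfolding f_def
    by (intro holomorphic_intros Ehol holomorphic_on_eval_fps) (simp add: Mrad)
  have "(\<lambda>n. (deriv ^^ n) f 0 / fact n * (z - 0) ^ n) sums f z"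
    by (rule holomorphic_power_series[of f 0 "norm z + 1"]) (use fhol in \<open>auto intro: holomorphic_on_subset\<close>)
  then have sm: "(\<lambda>n. c n * z ^ n) sums f z"
    using fps_nth_fps_expansion[OF fexp] cF' by simp
  have fz: "f z = exp (poly Q z) * hyp1F1 (- x) (of_real \<beta>) (- z)"
    unfolding f_def E_def M_def using M_hyp[OF \<beta>] by simp
  have tm: "of_real (sqrt (fact n * pochhammer \<beta> n)) * P n x / of_real (fact n * pochhammer \<beta> n) * z ^ n = c n * z ^ n" for n
  proof -
    have "complex_of_real (fact n * pochhammer \<beta> n) = s n * s n"
      unfolding s_def h_def using hpos[of n] unfolding h_def by (simp flip: of_real_mult)
    then show ?thesis unfolding c_def s_def[symmetric] h_def[symmetric] using snz[of n]
      by (simp add: s_def h_def)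
  qed
  show ?thesis unfolding tm fz[symmetric] by (rule sm)
qed

end
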